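(* Let $G$ be a finite group with identity $e$, $R[G]$ its real group algebra, $S=\{x\in R[G]:\sum_gx_g=1,\ x_g\ge0\ \forall g\}$, and let $(p^{[n]}(t))_{n\in\mathbb N}$, $p^{[n]}(t)=\sum_{k=0}^\infty a_k^{[n]}t^k$, be any sequence of real power series with $\sum_k|a_k^{[n]}|<\infty$ for each $n$ and $\lim_{n\to\infty}\sup\{|a_k^{[n]}|:k\ge1\}=0$. Then for every $x\in S$, either neither of the limits $\lim_{n\to\infty}p^{[n]}(x)$, $\lim_{n\to\infty}p^{[n]}(xc_x)$ exists, or both exist and $\lim_{n\to\infty}p^{[n]}(x)=\lim_{n\to\infty}p^{[n]}(xc_x)$.
   Context: For $y\in S$, $p^{[n]}(y)=a_0^{[n]}e+\sum_{k\ge1}a_k^{[n]}y^k$ (convergent); Euclidean topology on $R[G]$. $\mathrm{Supp}(y)=\{g:y_g\ne0\}$; for $x\in S$, $n_x=\min\{k\ge1:(x^k)_e\ne0\}$, $G_x$ is the subgroup generated by $\mathrm{Supp}(x^{n_x})$, and $c_x=\frac1{|G_x|}\sum_{g\in G_x}g$. *)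

theory Defs
  imports "HOL-Analysis.Analysis"
begin

text \<open>The finite group G is a type of class finite and group_add (a possibly
non-commutative group, written additively: identity 0, product +, inverse uminus).
Elements of the real group algebra R[G] are functions G \<Rightarrow> real (coefficient vectors).\<close>

definition gdelta :: "'g::group_add \<Rightarrow> 'g \<Rightarrow> real" where
  "gdelta h = (\<lambda>g. if g = h then 1 else 0)"

definition gconv :: "('g::{finite,group_add} \<Rightarrow> real) \<Rightarrow> ('g \<Rightarrow> real) \<Rightarrow> ('g \<Rightarrow> real)" where
  "gconv x y = (\<lambda>g. \<Sum>h\<in>UNIV. x h * y (- h + g))"

fun gpow :: "('g::{finite,group_add} \<Rightarrow> real) \<Rightarrow> nat \<Rightarrow> ('g \<Rightarrow> real)" where
  "gpow x 0 = gdelta 0"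
| "gpow x (Suc k) = gconv x (gpow x k)"

definition prob_simplex :: "('g::finite \<Rightarrow> real) set" where
  "prob_simplex = {x. (\<Sum>g\<in>UNIV. x g) = 1 \<and> (\<forall>g. x g \<ge> 0)}"

definition supp :: "('g \<Rightarrow> real) \<Rightarrow> 'g set" where
  "supp y = {g. y g \<noteq> 0}"

definition is_subgroup :: "'g::group_add set \<Rightarrow> bool" where
  "is_subgroup H \<longleftrightarrow> 0 \<in> H \<and> (\<forall>a\<in>H. \<forall>b\<in>H. a + b \<in> H) \<and> (\<forall>a\<in>H. - a \<in> H)"

definition gen_subgroup :: "'g::group_add set \<Rightarrow> 'g set" where
  "gen_subgroup A = \<Inter>{H. is_subgroup H \<and> A \<subseteq> H}"

definition n_of :: "('g::{finite,group_add} \<Rightarrow> real) \<Rightarrow> nat" where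
  "n_of x = (LEAST k. k \<ge> 1 \<and> gpow x k 0 \<noteq> 0)"

definition G_of :: "('g::{finite,group_add} \<Rightarrow> real) \<Rightarrow> 'g set" where
  "G_of x = gen_subgroup (supp (gpow x (n_of x)))"

definition c_of :: "('g::{finite,group_add} \<Rightarrow> real) \<Rightarrow> ('g \<Rightarrow> real)" where
  "c_of x = (\<lambda>g. if g \<in> G_of x then 1 / real (card (G_of x)) else 0)"

definition pser_eval :: "(nat \<Rightarrow> real) \<Rightarrow> ('g::{finite,group_add} \<Rightarrow> real) \<Rightarrow> ('g \<Rightarrow> real)" where
  "pser_eval c y = (\<lambda>g. c 0 * gdelta 0 g + (\<Sum>k. c (Suc k) * gpow y (Suc k) g))"

text \<open>Convergence in the Euclidean topology of R[G] = R^G (componentwise).\<close>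
definition conv_to :: "(nat \<Rightarrow> ('g \<Rightarrow> real)) \<Rightarrow> ('g \<Rightarrow> real) \<Rightarrow> bool" where
  "conv_to f L \<longleftrightarrow> (\<forall>g. (\<lambda>n. f n g) \<longlonglongrightarrow> L g)"

end

theory Submission
  imports Defs
begin

lemma sum_shift_left:
  fixes f :: "'g::{finite,group_add} \<Rightarrow> 'b::comm_monoid_add"
  shows "(\<Sum>k\<in>UNIV. f (h + k)) = (\<Sum>k\<in>UNIV. f k)"
  by (rule sum.reindex_bij_witness[where i="\<lambda>k. -h + k" and j="\<lambda>k. h + k"])
     (auto simp: add.assoc[symmetric])

lemma sum_shift_minus:
  fixes f :: "'g::{finite,group_add} \<Rightarrow> 'b::comm_monoid_add"
  shows "(\<Sum>k\<in>UNIV. f (- k + g)) = (\<Sum>k\<in>UNIV. f k)"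
  by (rule sum.reindex_bij_witness[where i="\<lambda>k. g + - k" and j="\<lambda>k. - k + g"])
     (auto simp: add.assoc[symmetric] minus_add)

lemma gconv_assoc:
  "gconv (gconv u v) w = gconv u (gconv v w)"
proof
  fix g
  have "gconv (gconv u v) w g = (\<Sum>m\<in>UNIV. \<Sum>h\<in>UNIV. u h * v (-h+m) * w (-m+g))"
    by (simp add: gconv_def sum_distrib_right)
  also have "\<dots> = (\<Sum>h\<in>UNIV. \<Sum>m\<in>UNIV. u h * v (-h+m) * w (-m+g))"
    by (rule sum.swap)
  also have "\<dots> = (\<Sum>h\<in>UNIV. \<Sum>k\<in>UNIV. u h * v (-h+(h+k)) * w (-(h+k)+g))"
    by (rule sum.cong[OF refl], rule sum_shift_left[symmetric])
  also have "\<dots> = gconv u (gconv v w) g"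
    by (simp add: gconv_def sum_distrib_left add.assoc[symmetric] minus_add mult.assoc)
  finally show "gconv (gconv u v) w g = gconv u (gconv v w) g" .
qed

lemma gconv_diff_left: "gconv (\<lambda>g. u g - v g) w = (\<lambda>g. gconv u w g - gconv v w g)"
  by (auto simp: gconv_def left_diff_distrib sum_subtractf)
lemma gconv_diff_right: "gconv w (\<lambda>g. u g - v g) = (\<lambda>g. gconv w u g - gconv w v g)"
  by (auto simp: gconv_def right_diff_distrib sum_subtractf)
lemma gconv_scale_left: "gconv (\<lambda>g. t * u g) w = (\<lambda>g. t * gconv u w g)"
  by (auto simp: gconv_def sum_distrib_left mult.assoc)
lemma gconv_scale_right: "gconv w (\<lambda>g. t * u g) = (\<lambda>g. t * gconv w u g)"
  by (auto simp: gconv_def sum_distrib_left mult.left_commute)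

lemma gconv_delta_left: "gconv (gdelta 0) y = y"
proof
  fix g
  have "gconv (gdelta 0) y g = (\<Sum>h\<in>UNIV. if h = 0 then y (-h+g) else 0)"
    unfolding gconv_def gdelta_def by (rule sum.cong) auto
  then show "gconv (gdelta 0) y g = y g" by simp
qed
lemma gconv_delta_right: "gconv y (gdelta 0) = y"
proof
  fix g
  have "gconv y (gdelta 0) g = (\<Sum>h\<in>UNIV. if h = g then y h else 0)"
    unfolding gconv_def gdelta_def
    by (rule sum.cong) (auto, metis add_minus_cancel add.right_neutral)
  then show "gconv y (gdelta 0) g = y g" by simp
qed

lemma gpow_add: "gpow x (m + k) = gconv (gpow x m) (gpow x k)"
  by (induction m) (simp_all add: gconv_delta_left gconv_assoc)
lemma gpow_one: "gpow x 1 = x" by (simp add: gconv_delta_right)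
lemma gpow_Suc': "gpow x (Suc k) = gconv (gpow x k) x"
  by (metis gpow_add gpow_one Suc_eq_plus1)

definition l1n :: "('g::finite \<Rightarrow> real) \<Rightarrow> real" where
  "l1n v = (\<Sum>g\<in>UNIV. \<bar>v g\<bar>)"

lemma gconv_nonneg:
  assumes "\<And>g. 0 \<le> u g" "\<And>g. 0 \<le> v g" shows "0 \<le> gconv u v g"
  unfolding gconv_def using assms by (auto intro!: sum_nonneg)

lemma gconv_sum: "(\<Sum>g\<in>UNIV. gconv u v g) = (\<Sum>g\<in>UNIV. u g) * (\<Sum>g\<in>UNIV. v g)"
proof -
  have "(\<Sum>g\<in>UNIV. gconv u v g) = (\<Sum>h\<in>UNIV. \<Sum>g\<in>UNIV. u h * v (-h+g))"
    unfolding gconv_def by (rule sum.swap)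
  also have "\<dots> = (\<Sum>h\<in>UNIV. u h * (\<Sum>g\<in>UNIV. v (-h+g)))"
    by (simp add: sum_distrib_left)
  also have "\<dots> = (\<Sum>h\<in>UNIV. u h * (\<Sum>g\<in>UNIV. v g))"
    by (simp add: sum_shift_left)
  finally show ?thesis by (simp add: sum_distrib_right)
qed

lemma prob_gconv: "u \<in> prob_simplex \<Longrightarrow> v \<in> prob_simplex \<Longrightarrow> gconv u v \<in> prob_simplex"
  unfolding prob_simplex_def by (auto simp: gconv_sum intro!: gconv_nonneg)

lemma prob_delta: "gdelta 0 \<in> prob_simplex"
  unfolding prob_simplex_def gdelta_def by auto

lemma prob_gpow: "x \<in> prob_simplex \<Longrightarrow> gpow x k \<in> prob_simplex"
  by (induction k) (auto simp: prob_delta prob_gconv)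

lemma prob_nonneg: "u \<in> prob_simplex \<Longrightarrow> 0 \<le> u g"
  unfolding prob_simplex_def by auto

lemma prob_le1: "u \<in> prob_simplex \<Longrightarrow> u g \<le> 1"
proof -
  assume u: "u \<in> prob_simplex"
  have "u g \<le> (\<Sum>h\<in>UNIV. u h)"
    by (rule member_le_sum) (auto simp: prob_nonneg[OF u])
  then show ?thesis using u unfolding prob_simplex_def by auto
qed

lemma abs_le_l1n: "\<bar>v g\<bar> \<le> l1n v"
  unfolding l1n_def by (rule member_le_sum) auto

lemma l1n_prob: "u \<in> prob_simplex \<Longrightarrow> l1n u = 1"
  unfolding l1n_def prob_simplex_def by auto

lemma l1n_nonneg_eq: "(\<And>g. 0 \<le> u g) \<Longrightarrow> l1n u = (\<Sum>g\<in>UNIV. u g)"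
  unfolding l1n_def by auto

lemma l1n_gconv: "l1n (gconv u v) \<le> l1n u * l1n v"
proof -
  have "l1n (gconv u v) \<le> (\<Sum>g\<in>UNIV. \<Sum>h\<in>UNIV. \<bar>u h\<bar> * \<bar>v (-h+g)\<bar>)"
    unfolding l1n_def gconv_def
    by (rule sum_mono) (rule order_trans[OF sum_abs], simp add: abs_mult)
  also have "\<dots> = (\<Sum>h\<in>UNIV. \<Sum>g\<in>UNIV. \<bar>u h\<bar> * \<bar>v (-h+g)\<bar>)"
    by (rule sum.swap)
  also have "\<dots> = (\<Sum>h\<in>UNIV. \<bar>u h\<bar> * (\<Sum>g\<in>UNIV. \<bar>v (-h+g)\<bar>))"
    by (simp add: sum_distrib_left)
  also have "\<dots> = (\<Sum>h\<in>UNIV. \<bar>u h\<bar> * l1n v)"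
    unfolding l1n_def by (simp add: sum_shift_left[where f="\<lambda>g. \<bar>v g\<bar>"])
  finally show ?thesis by (simp add: l1n_def sum_distrib_right)
qed

lemma supp_gconv_sub:
  assumes "g \<in> supp (gconv u v)"
  shows "\<exists>a b. a \<in> supp u \<and> b \<in> supp v \<and> g = a + b"
proof (rule ccontr)
  assume "\<not> ?thesis"
  then have z: "\<And>h. u h * v (-h+g) = 0"
    by (auto simp: supp_def) (metis add_minus_cancel)
  have "gconv u v g = 0" unfolding gconv_def by (rule sum.neutral) (simp add: z)
  then show False using assms by (simp add: supp_def)
qed

lemma supp_gconv_sup:
  assumes "\<And>g. 0 \<le> u g" "\<And>g. 0 \<le> v g" "a \<in> supp u" "b \<in> supp v"
  shows "a + b \<in> supp (gconv u v)"
proof -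
  have "u a * v b \<le> (\<Sum>h\<in>UNIV. u h * v (-h + (a+b)))"
    using member_le_sum[of a UNIV "\<lambda>h. u h * v (-h + (a+b))"] assms(1,2)
    by (simp add: add.assoc[symmetric])
  moreover have "u a * v b > 0" using assms by (auto simp: supp_def less_le)
  ultimately show ?thesis by (auto simp: supp_def gconv_def)
qed

lemma prob_supp_ne: "u \<in> prob_simplex \<Longrightarrow> \<exists>g. g \<in> supp u"
  unfolding prob_simplex_def supp_def by (metis (mono_tags, lifting) mem_Collect_eq sum.neutral zero_neq_one)

lemma prob_supp_nonneg: "u \<in> prob_simplex \<Longrightarrow> g \<in> supp u \<Longrightarrow> 0 < u g"
  by (auto simp: supp_def prob_nonneg less_le)

lemma is_subgroup_gen: "is_subgroup (gen_subgroup A)"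
  unfolding is_subgroup_def gen_subgroup_def by auto

lemma gen_sup: "A \<subseteq> gen_subgroup A"
  unfolding gen_subgroup_def by auto

lemma gen_least: "is_subgroup K \<Longrightarrow> A \<subseteq> K \<Longrightarrow> gen_subgroup A \<subseteq> K"
  unfolding gen_subgroup_def by auto

lemma subgroup_shift_iff:
  assumes "is_subgroup H" "h \<in> H" shows "(-h + g \<in> H) = (g \<in> H)"
proof
  assume "-h + g \<in> H"
  then have "h + (-h + g) \<in> H" using assms unfolding is_subgroup_def by blast
  then show "g \<in> H" by (simp add: add.assoc[symmetric])
next
  assume "g \<in> H"
  then show "-h + g \<in> H" using assms unfolding is_subgroup_def by blast
qed

definition cH :: "'g::finite set \<Rightarrow> 'g \<Rightarrow> real" where
  "cH H = (\<lambda>g. if g \<in> H then 1 / real (card H) else 0)"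

lemma c_of_cH: "c_of x = cH (G_of x)"
  unfolding c_of_def cH_def by simp

lemma cH_nonneg: "0 \<le> cH H g" unfolding cH_def by auto

lemma cH_prob:
  assumes "is_subgroup (H::'g::{finite,group_add} set)" shows "cH H \<in> prob_simplex"
proof -
  have "0 \<in> H" using assms unfolding is_subgroup_def by auto
  then have "card H > 0" by (auto simp: card_gt_0_iff)
  have "(\<Sum>g\<in>UNIV. cH H g) = (\<Sum>g\<in>H. 1 / real (card H))"
    unfolding cH_def by (simp add: sum.If_cases)
  also have "\<dots> = 1" using \<open>card H > 0\<close> by (simp add: card_gt_0_iff)
  finally show ?thesis unfolding prob_simplex_def using cH_nonneg by auto
qed

lemma conv_cH_right:
  assumes H: "is_subgroup H" and z: "z \<in> prob_simplex" and zs: "supp z \<subseteq> H"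
  shows "gconv z (cH H) = cH H"
proof
  fix g
  have "gconv z (cH H) g = (\<Sum>h\<in>UNIV. z h * cH H g)"
    unfolding gconv_def
  proof (rule sum.cong[OF refl])
    fix h
    show "z h * cH H (- h + g) = z h * cH H g"
    proof (cases "z h = 0")
      case False
      then have "h \<in> H" using zs by (auto simp: supp_def)
      then show ?thesis using subgroup_shift_iff[OF H] by (simp add: cH_def)
    qed simp
  qed
  also have "\<dots> = cH H g" using z by (simp add: sum_distrib_right[symmetric] prob_simplex_def)
  finally show "gconv z (cH H) g = cH H g" .
qed

lemma conv_cH_left:
  assumes H: "is_subgroup H" and z: "z \<in> prob_simplex" and zs: "supp z \<subseteq> H"
  shows "gconv (cH H) z = cH H"
proof
  fix g
  have "gconv (cH H) z g = (\<Sum>h\<in>UNIV. cH H g * z (-h + g))"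
    unfolding gconv_def
  proof (rule sum.cong[OF refl])
    fix h
    show "cH H h * z (- h + g) = cH H g * z (-h + g)"
    proof (cases "z (-h + g) = 0")
      case False
      then have "-h + g \<in> H" using zs by (auto simp: supp_def)
      moreover have "h \<in> H \<longleftrightarrow> g \<in> H"
      proof
        assume "h \<in> H" then show "g \<in> H" using subgroup_shift_iff[OF H] \<open>-h + g \<in> H\<close> by blast
      next
        assume "g \<in> H"
        then have "g + - (-h + g) \<in> H" using H \<open>-h + g \<in> H\<close> unfolding is_subgroup_def by blast
        then show "h \<in> H" by (simp add: minus_add add.assoc[symmetric])
      qed
      ultimately show ?thesis by (simp add: cH_def)
    qed simp
  qed
  also have "\<dots> = cH H g * (\<Sum>h\<in>UNIV. z (-h + g))" by (simp add: sum_distrib_left)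
  also have "\<dots> = cH H g" using z by (simp add: sum_shift_minus prob_simplex_def)
  finally show "gconv (cH H) z g = cH H g" .
qed

lemma supp_cH: "supp (cH H) \<subseteq> H" unfolding supp_def cH_def by auto

lemma cH_idem: "is_subgroup H \<Longrightarrow> gconv (cH H) (cH H) = cH H"
  by (rule conv_cH_left) (auto simp: cH_prob supp_cH)

lemma funpow_plus_shift:
  fixes a w :: "'g::group_add"
  shows "((+) a ^^ d) w = ((+) a ^^ d) 0 + w"
  by (induction d) (simp_all add: add.assoc)

lemma finite_order:
  fixes a :: "'g::{finite,group_add}"
  shows "\<exists>d\<ge>1. ((+) a ^^ d) 0 = 0"
proof -
  let ?f = "\<lambda>k::nat. ((+) a ^^ k) 0"
  have "\<not> inj ?f"
  proof
    assume "inj ?f"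
    moreover have "finite (range ?f)" by simp
    ultimately have "finite (UNIV :: nat set)"
      using finite_imageD[of ?f UNIV] by blast
    then show False by simp
  qed
  then obtain i j where ij: "i \<noteq> j" "?f i = ?f j" unfolding inj_def by blast
  have "\<exists>i j. i < j \<and> ?f i = ?f j"
  proof (cases "i < j")
    case True then show ?thesis using ij by blast
  next
    case False then have "j < i" using ij(1) by simp
    then show ?thesis using ij(2) by metis
  qed
  then obtain i j where ij: "i < j" "?f i = ?f j" by blast
  define d where "d = j - i"
  have jd: "j = d + i" using ij(1) by (simp add: d_def)
  have "?f j = ((+) a ^^ d) (?f i)"
    unfolding jd funpow_add by simp
  also have "\<dots> = ?f d + ?f i" by (rule funpow_plus_shift)
  finally have "?f d + ?f i = ?f i" using ij(2) by simp
  then have "?f d = 0" by (metis add.left_neutral add_right_cancel)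
  moreover have "d \<ge> 1" using ij(1) by (simp add: d_def)
  ultimately show ?thesis by blast
qed

lemma n_of_exists:
  assumes xS: "x \<in> prob_simplex"
  shows "\<exists>k. k \<ge> 1 \<and> gpow x k 0 \<noteq> 0"
proof -
  obtain a where a: "a \<in> supp x" using prob_supp_ne[OF xS] by blast
  have fk: "((+) a ^^ k) 0 \<in> supp (gpow x k)" for k
  proof (induction k)
    case 0 then show ?case by (simp add: supp_def gdelta_def)
  next
    case (Suc k)
    have "a + ((+) a ^^ k) 0 \<in> supp (gconv x (gpow x k))"
      by (rule supp_gconv_sup[OF _ _ a Suc]) (auto simp: prob_nonneg xS prob_gpow)
    then show ?case by simp
  qed
  obtain d where "d \<ge> 1" and d0: "((+) a ^^ d) 0 = 0" using finite_order by blast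
  have "((+) a ^^ d) 0 \<in> supp (gpow x d)" by (rule fk)
  then have "gpow x d 0 \<noteq> 0" using d0 by (simp add: supp_def)
  then show ?thesis using \<open>d \<ge> 1\<close> by blast
qed

lemma n_of_props:
  assumes xS: "x \<in> prob_simplex"
  shows "n_of x \<ge> 1" "gpow x (n_of x) 0 \<noteq> 0"
  using LeastI_ex[OF n_of_exists[OF xS]] unfolding n_of_def by auto

lemma subgroup_of_closed:
  fixes K :: "'g::{finite,group_add} set"
  assumes ne: "K \<noteq> {}" and cl: "\<And>a b. a \<in> K \<Longrightarrow> b \<in> K \<Longrightarrow> a + b \<in> K"
  shows "is_subgroup K"
proof -
  have img: "(\<lambda>b. a + b) ` K = K" if a: "a \<in> K" for a
  proof (rule card_subset_eq)
    show "(\<lambda>b. a + b) ` K \<subseteq> K" using cl a by auto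
    show "card ((\<lambda>b. a + b) ` K) = card K" by (rule card_image) (auto intro: inj_onI)
  qed simp
  obtain a0 where a0: "a0 \<in> K" using ne by blast
  then have "a0 \<in> (\<lambda>b. a0 + b) ` K" using img by simp
  then obtain b where "b \<in> K" "a0 = a0 + b" by auto
  then have z: "0 \<in> K" by (metis add_left_cancel add.right_neutral)
  have "- a \<in> K" if "a \<in> K" for a
  proof -
    have "0 \<in> (\<lambda>b. a + b) ` K" using img[OF that] z by simp
    then obtain b where "b \<in> K" "0 = a + b" by auto
    then show ?thesis by (metis minus_unique)
  qed
  then show ?thesis using z cl unfolding is_subgroup_def by blast
qed

context
  fixes x :: "'g::{finite,group_add} \<Rightarrow> real"
  assumes xS: "x \<in> prob_simplex"
begin

private abbreviation "nn \<equiv> n_of x"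
private abbreviation "HH \<equiv> G_of x"
private definition "T j = supp (gpow x (nn * j))"

private lemma nonnegP: "0 \<le> gpow x k g" by (rule prob_nonneg[OF prob_gpow[OF xS]])

private lemma T_mono: "T j \<subseteq> T (Suc j)"
proof
  fix g assume g: "g \<in> T j"
  have e: "gpow x (nn * Suc j) = gconv (gpow x (nn * j)) (gpow x nn)"
    by (metis gpow_add mult_Suc_right add.commute)
  have "0 \<in> supp (gpow x nn)" using n_of_props[OF xS] by (simp add: supp_def)
  then have "g + 0 \<in> supp (gconv (gpow x (nn * j)) (gpow x nn))"
    using g unfolding T_def by (intro supp_gconv_sup) (auto simp: nonnegP)
  then show "g \<in> T (Suc j)" unfolding T_def e by simp
qed

private lemma T_sub: "T j \<subseteq> HH"
proof (induction j)
  case 0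
  have "0 \<in> HH" using is_subgroup_gen unfolding G_of_def is_subgroup_def by blast
  then show ?case by (auto simp: T_def supp_def gdelta_def)
next
  case (Suc j)
  have e: "gpow x (nn * Suc j) = gconv (gpow x (nn * j)) (gpow x nn)"
    by (metis gpow_add mult_Suc_right add.commute)
  show ?case
  proof
    fix g assume "g \<in> T (Suc j)"
    then obtain a b where "a \<in> T j" "b \<in> supp (gpow x nn)" "g = a + b"
      unfolding T_def e using supp_gconv_sub by blast
    moreover have "b \<in> HH" using \<open>b \<in> supp (gpow x nn)\<close> gen_sup unfolding G_of_def by blast
    ultimately show "g \<in> HH" using Suc is_subgroup_gen unfolding G_of_def is_subgroup_def by blast
  qed
qed

private lemma T_stable: "\<exists>J. \<forall>j\<ge>J. T j = HH"
proof -
  let ?c = "\<lambda>j. card (T j)"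
  have "range ?c \<subseteq> {..card (UNIV :: 'g set)}"
    by (auto intro: card_mono)
  then have fin: "finite (range ?c)" by (rule finite_subset) simp
  obtain J where J: "?c J = Max (range ?c)"
    using Max_in[OF fin] by auto
  have mono: "T J \<subseteq> T j" if "J \<le> j" for j
    using lift_Suc_mono_le[of T, OF T_mono that] .
  have st: "T j = T J" if "J \<le> j" for j
  proof -
    have "?c j \<le> ?c J" using J fin by simp
    moreover have "?c J \<le> ?c j" using mono[OF that] by (rule card_mono[rotated]) simp
    ultimately have "?c J = ?c j" by simp
    then show ?thesis using mono[OF that] by (intro card_subset_eq[symmetric]) auto
  qed
  define K where "K = T J"
  have ne: "K \<noteq> {}" unfolding K_def T_def using prob_supp_ne[OF prob_gpow[OF xS]] by blast
  have cl: "a + b \<in> K" if "a \<in> K" "b \<in> K" for a b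
  proof -
    have e: "gpow x (nn * (J + J)) = gconv (gpow x (nn * J)) (gpow x (nn * J))"
      by (metis gpow_add add_mult_distrib2)
    have "a + b \<in> T (J + J)" unfolding T_def e
      using that unfolding K_def T_def by (intro supp_gconv_sup) (auto simp: nonnegP)
    then show ?thesis using st[of "J+J"] K_def by simp
  qed
  have sg: "is_subgroup K" by (rule subgroup_of_closed[OF ne cl])
  have "supp (gpow x nn) \<subseteq> K"
    using mono[of "J+1"] st[of "J+1"] lift_Suc_mono_le[of T, OF T_mono, of 1 "J+1"]
    unfolding K_def T_def by simp
  then have "HH \<subseteq> K" unfolding G_of_def by (rule gen_least[OF sg])
  moreover have "K \<subseteq> HH" unfolding K_def by (rule T_sub)
  ultimately have "K = HH" by blast
  then show ?thesis using st K_def by blast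
qed

private lemma coset_eq:
  assumes a: "a \<in> supp x"
  shows "(\<lambda>h. a + h) ` HH = (\<lambda>h. h + a) ` HH"
proof -
  obtain J where J: "\<And>j. j \<ge> J \<Longrightarrow> T j = HH" using T_stable by blast
  define M where "M = nn * (J + 1)"
  have n1: "nn \<ge> 1" using n_of_props[OF xS] by simp
  have HM: "supp (gpow x M) = HH" using J[of "J+1"] unfolding T_def M_def by simp
  define L where "L = supp (gpow x (M + 1))"
  have e1: "gpow x (M + 1) = gconv (gpow x M) x" by (metis gpow_add gpow_one)
  have e2: "gpow x (M + 1) = gconv x (gpow x M)" by (metis gpow_add gpow_one add.commute)
  obtain b where b: "b \<in> supp (gpow x (nn - 1))" using prob_supp_ne[OF prob_gpow[OF xS]] by blast
  have e3: "gpow x (nn * (J + 2)) = gconv (gpow x (M + 1)) (gpow x (nn - 1))"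
  proof -
    have "nn * (J + 2) = (M + 1) + (nn - 1)" using n1 unfolding M_def by (simp add: algebra_simps)
    then show ?thesis by (metis gpow_add)
  qed
  have "(\<lambda>l. l + b) ` L \<subseteq> HH"
  proof
    fix y assume "y \<in> (\<lambda>l. l + b) ` L"
    then obtain l where "l \<in> L" "y = l + b" by auto
    then have "y \<in> T (J + 2)" unfolding T_def e3 L_def
      using b by (auto intro!: supp_gconv_sup simp: nonnegP gconv_nonneg prob_nonneg[OF xS])
    then show "y \<in> HH" using J[of "J+2"] by simp
  qed
  moreover have "card ((\<lambda>l. l + b) ` L) = card L" by (rule card_image) (auto intro: inj_onI)
  ultimately have cL: "card L \<le> card HH" by (metis card_mono finite)
  have s1: "(\<lambda>h. a + h) ` HH \<subseteq> L" unfolding L_def e2 using a HM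
    by (auto intro!: supp_gconv_sup simp: nonnegP prob_nonneg[OF xS])
  have s2: "(\<lambda>h. h + a) ` HH \<subseteq> L" unfolding L_def e1 using a HM
    by (auto intro!: supp_gconv_sup simp: nonnegP prob_nonneg[OF xS])
  have c1: "card ((\<lambda>h. a + h) ` HH) = card HH" by (rule card_image) (auto intro: inj_onI)
  have c2: "card ((\<lambda>h. h + a) ` HH) = card HH" by (rule card_image) (auto intro: inj_onI)
  have "(\<lambda>h. a + h) ` HH = L"
  proof (rule card_subset_eq[OF _ s1])
    have "card ((\<lambda>h. a + h) ` HH) \<le> card L" by (rule card_mono) (simp_all add: s1)
    then show "card ((\<lambda>h. a + h) ` HH) = card L" using c1 cL by simp
  qed simp
  moreover have "(\<lambda>h. h + a) ` HH = L"
  proof (rule card_subset_eq[OF _ s2])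
    have "card ((\<lambda>h. h + a) ` HH) \<le> card L" by (rule card_mono) (simp_all add: s2)
    then show "card ((\<lambda>h. h + a) ` HH) = card L" using c2 cL by simp
  qed simp
  ultimately show ?thesis by simp
qed

lemma x_c_comm: "gconv x (c_of x) = gconv (c_of x) x"
proof
  fix g
  let ?c = "c_of x"
  have mem: "(-h + g \<in> HH) = (g + -h \<in> HH)" if "h \<in> supp x" for h
  proof -
    have "(-h + g \<in> HH) = (g \<in> (\<lambda>k. h + k) ` HH)"
      by (auto simp: image_iff add.assoc[symmetric]) (metis add_minus_cancel)
    also have "\<dots> = (g \<in> (\<lambda>k. k + h) ` HH)" using coset_eq[OF that] by simp
    also have "\<dots> = (g + -h \<in> HH)"
      by (auto simp: image_iff add.assoc) (metis diff_add_cancel diff_conv_add_uminus)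
    finally show ?thesis .
  qed
  have "gconv ?c x g = (\<Sum>h\<in>UNIV. ?c (g + -h) * x h)"
    unfolding gconv_def
    by (rule sum.reindex_bij_witness[where i="\<lambda>h. g + - h" and j="\<lambda>h. -h + g"])
       (auto simp: minus_add add.assoc[symmetric])
  also have "\<dots> = gconv x ?c g"
    unfolding gconv_def
  proof (rule sum.cong[OF refl])
    fix h
    show "?c (g + -h) * x h = x h * ?c (- h + g)"
    proof (cases "x h = 0")
      case False
      then have "h \<in> supp x" by (simp add: supp_def)
      then show ?thesis using mem[of h] by (simp add: c_of_def)
    qed simp
  qed
  finally show "gconv x ?c g = gconv ?c x g" by simp
qed

lemma M_exists: "\<exists>M\<ge>1. supp (gpow x M) = HH \<and> (\<forall>q. supp (gpow x (M * q)) \<subseteq> HH)"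
proof -
  obtain J where J: "\<And>j. j \<ge> J \<Longrightarrow> T j = HH" using T_stable by blast
  define M where "M = nn * (J + 1)"
  have n1: "nn \<ge> 1" using n_of_props[OF xS] by simp
  have "supp (gpow x M) = HH" using J[of "J+1"] unfolding T_def M_def by simp
  moreover have "supp (gpow x (M * q)) \<subseteq> HH" for q
  proof -
    have "M * q = nn * ((J+1) * q)" unfolding M_def by (rule mult.assoc)
    then show ?thesis using T_sub[of "(J+1) * q"] unfolding T_def by simp
  qed
  moreover have "M \<ge> 1" using n1 unfolding M_def by simp
  ultimately show ?thesis by blast
qed

end

lemma summable_pow_div:
  fixes \<rho> :: real
  assumes r0: "0 < \<rho>" and r1: "\<rho> < 1" and M: "M \<ge> 1"
  shows "summable (\<lambda>k. \<rho> ^ (k div M))"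
proof -
  define \<sigma> where "\<sigma> = root M \<rho>"
  have s0: "0 < \<sigma>" using r0 M by (simp add: \<sigma>_def)
  have M0: "0 < M" using M by simp
  have s1: "\<sigma> < 1" using r1 M0 unfolding \<sigma>_def by (simp add: real_root_lt_1_iff)
  have sM: "\<sigma> ^ M = \<rho>" using M r0 by (simp add: \<sigma>_def real_root_pow_pos)
  have bnd: "\<rho> ^ (k div M) \<le> \<sigma> ^ k / \<rho>" for k
  proof -
    have "k \<le> M * (k div M) + M"
    proof -
      have "k div M * M + k mod M = k" by simp
      moreover have "k mod M < M" using M0 by simp
      moreover have "M * (k div M) = k div M * M" by simp
      ultimately show ?thesis by linarith
    qed
    then have "\<sigma> ^ (M * (k div M) + M) \<le> \<sigma> ^ k"
      using s0 s1 by (intro power_decreasing) auto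
    also have "\<sigma> ^ (M * (k div M) + M) = \<rho> ^ (k div M) * \<rho>"
      by (simp add: power_add power_mult sM)
    finally show ?thesis using r0 by (simp add: field_simps)
  qed
  have "summable (\<lambda>k. \<sigma> ^ k / \<rho>)"
    using s0 s1 by (intro summable_divide summable_geometric) simp
  then show ?thesis
    by (rule summable_comparison_test[rotated]) (use bnd r0 in auto)
qed

lemma l1n_diff: "l1n (\<lambda>g. u g - v g) \<le> l1n u + l1n v"
  unfolding l1n_def by (simp add: sum.distrib[symmetric] sum_mono abs_triangle_ineq4)

context
  fixes x :: "'g::{finite,group_add} \<Rightarrow> real"
  assumes xS: "x \<in> prob_simplex"
begin

private abbreviation "HH2 \<equiv> G_of x"
private abbreviation "cc2 \<equiv> c_of x"

private lemma sgH: "is_subgroup HH2" unfolding G_of_def by (rule is_subgroup_gen)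
private lemma cc2H: "cc2 = cH HH2" by (rule c_of_cH)
private lemma cc2_prob: "cc2 \<in> prob_simplex" using cH_prob[OF sgH] cc2H by simp
private lemma cc2_idem: "gconv cc2 cc2 = cc2" using cH_idem[OF sgH] cc2H by simp

private lemma c_pow_comm: "gconv cc2 (gpow x j) = gconv (gpow x j) cc2"
proof (induction j)
  case 0 then show ?case by (simp add: gconv_delta_left gconv_delta_right)
next
  case (Suc j)
  have "gconv cc2 (gpow x (Suc j)) = gconv (gconv cc2 x) (gpow x j)" by (simp only: gpow.simps(2) gconv_assoc)
  also have "\<dots> = gconv (gconv x cc2) (gpow x j)" by (simp only: x_c_comm[OF xS])
  also have "\<dots> = gconv x (gconv (gpow x j) cc2)" by (simp only: gconv_assoc Suc)
  also have "\<dots> = gconv (gpow x (Suc j)) cc2" by (simp only: gpow.simps(2) gconv_assoc)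
  finally show ?case .
qed

lemma xc_pow: "gpow (gconv x cc2) (Suc k) = gconv (gpow x (Suc k)) cc2"
proof (induction k)
  case 0 then show ?case by (simp add: gconv_delta_right)
next
  case (Suc k)
  have A: "gconv cc2 (gconv (gpow x (Suc k)) cc2) = gconv (gpow x (Suc k)) cc2"
  proof -
    have "gconv cc2 (gconv (gpow x (Suc k)) cc2) = gconv (gconv cc2 (gpow x (Suc k))) cc2"
      by (rule gconv_assoc[symmetric])
    also have "\<dots> = gconv (gconv (gpow x (Suc k)) cc2) cc2" by (simp only: c_pow_comm)
    also have "\<dots> = gconv (gpow x (Suc k)) (gconv cc2 cc2)" by (rule gconv_assoc)
    finally show ?thesis by (simp only: cc2_idem)
  qed
  have "gpow (gconv x cc2) (Suc (Suc k)) = gconv (gconv x cc2) (gpow (gconv x cc2) (Suc k))"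
    by (rule gpow.simps(2))
  also have "\<dots> = gconv (gconv x cc2) (gconv (gpow x (Suc k)) cc2)" by (simp only: Suc)
  also have "\<dots> = gconv x (gconv cc2 (gconv (gpow x (Suc k)) cc2))" by (rule gconv_assoc)
  also have "\<dots> = gconv x (gconv (gpow x (Suc k)) cc2)" by (simp only: A)
  also have "\<dots> = gconv (gpow x (Suc (Suc k))) cc2"
    unfolding gpow.simps(2)[of x "Suc k"] gconv_assoc ..
  finally show ?case .
qed

lemma decay: "\<exists>M\<ge>1. \<exists>\<rho>. 0 < \<rho> \<and> \<rho> < 1 \<and>
   (\<forall>k. l1n (\<lambda>g. gpow x k g - gconv (gpow x k) cc2 g) \<le> 2 * \<rho> ^ (k div M))"
proof -
  obtain M where M1: "M \<ge> 1" and HM: "supp (gpow x M) = HH2"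
    and HMq: "\<And>q. supp (gpow x (M * q)) \<subseteq> HH2"
    using M_exists[OF xS] by blast
  define z where "z = gpow x M"
  have zP: "z \<in> prob_simplex" unfolding z_def by (rule prob_gpow[OF xS])
  have Hne: "HH2 \<noteq> {}" using sgH unfolding is_subgroup_def by auto
  define m where "m = Min (z ` HH2)"
  have m0: "m > 0" unfolding m_def using Hne HM prob_supp_nonneg[OF zP]
    by (subst Min_gr_iff) (auto simp: z_def)
  have mz: "m \<le> z h" if "h \<in> HH2" for h unfolding m_def using that by simp
  have cardH: "card HH2 > 0" using Hne by (simp add: card_gt_0_iff)
  define \<theta> where "\<theta> = min (m * real (card HH2)) (1/2)"
  have th0: "0 < \<theta>" using m0 cardH by (simp add: \<theta>_def)
  have th1: "\<theta> < 1" by (simp add: \<theta>_def)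
  define w where "w = (\<lambda>g. z g - \<theta> * cc2 g)"
  have w0: "0 \<le> w g" for g
  proof (cases "g \<in> HH2")
    case True
    have "\<theta> * cc2 g = \<theta> / real (card HH2)" using True by (simp add: cc2H cH_def)
    also have "\<dots> \<le> m" using cardH by (simp add: pos_divide_le_eq \<theta>_def)
    finally show ?thesis using mz[OF True] by (simp add: w_def)
  next
    case False then show ?thesis using prob_nonneg[OF zP] by (simp add: w_def cc2H cH_def)
  qed
  have lw: "l1n w = 1 - \<theta>"
    using w0 zP cc2_prob
    by (simp add: l1n_nonneg_eq w_def sum_subtractf sum_distrib_left[symmetric] prob_simplex_def)
  define D where "D = (\<lambda>q g. gpow x (M * q) g - cc2 g)"
  have Dstep: "gconv (D q) w = D (Suc q)" for q
  proof -
    have P: "gpow x (M * q) \<in> prob_simplex" by (rule prob_gpow[OF xS])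
    have e1: "gconv (gpow x (M * q)) z = gpow x (M * Suc q)"
      unfolding z_def by (simp add: gpow_add[symmetric] add.commute)
    have e2: "gconv (gpow x (M * q)) cc2 = cc2"
      unfolding cc2H by (rule conv_cH_right[OF sgH P HMq])
    have e3: "gconv cc2 z = cc2"
      unfolding cc2H by (rule conv_cH_left[OF sgH zP]) (simp add: HM z_def)
    show ?thesis unfolding D_def w_def
      by (simp add: gconv_diff_left gconv_diff_right gconv_scale_right e1 e2 e3 cc2_idem)
  qed
  have Dbound: "l1n (D q) \<le> 2 * (1 - \<theta>) ^ q" for q
  proof (induction q)
    case 0
    have "l1n (D 0) \<le> l1n (gdelta (0::'g)) + l1n cc2" unfolding D_def mult_0_right gpow.simps(1) by (rule l1n_diff)
    also have "\<dots> = 2" using l1n_prob[OF prob_delta] l1n_prob[OF cc2_prob] by simp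
    finally show ?case by simp
  next
    case (Suc q)
    have "l1n (D (Suc q)) \<le> l1n (D q) * l1n w" unfolding Dstep[symmetric] by (rule l1n_gconv)
    also have "\<dots> \<le> 2 * (1 - \<theta>) ^ q * (1 - \<theta>)" unfolding lw
      using Suc th1 by (intro mult_right_mono) auto
    finally show ?case by (simp add: mult_ac)
  qed
  have "l1n (\<lambda>g. gpow x k g - gconv (gpow x k) cc2 g) \<le> 2 * (1 - \<theta>) ^ (k div M)" for k
  proof -
    define r where "r = k mod M"
    define q where "q = k div M"
    have kd: "k = r + M * q" unfolding r_def q_def by simp
    have Pk: "gpow x k = gconv (gpow x r) (gpow x (M * q))" unfolding kd by (rule gpow_add)
    have e2: "gconv (gpow x (M * q)) cc2 = cc2"
      unfolding cc2H by (rule conv_cH_right[OF sgH prob_gpow[OF xS] HMq])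
    have "(\<lambda>g. gpow x k g - gconv (gpow x k) cc2 g) = gconv (gpow x r) (D q)"
      unfolding D_def gconv_diff_right Pk gconv_assoc e2 by simp
    then have "l1n (\<lambda>g. gpow x k g - gconv (gpow x k) cc2 g) \<le> l1n (gpow x r) * l1n (D q)"
      by (simp add: l1n_gconv)
    also have "\<dots> = l1n (D q)" using l1n_prob[OF prob_gpow[OF xS]] by simp
    also have "\<dots> \<le> 2 * (1 - \<theta>) ^ q" by (rule Dbound)
    finally show ?thesis by (simp add: q_def)
  qed
  then show ?thesis using M1 th0 th1 by (intro exI[of _ M] conjI exI[of _ "1 - \<theta>"]) auto
qed

end

theorem lemma3:
  fixes a :: "nat \<Rightarrow> nat \<Rightarrow> real" and x :: "'g::{finite,group_add} \<Rightarrow> real"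
  assumes abs_summ: "\<And>n. summable (\<lambda>k. \<bar>a n k\<bar>)"
    and sup_lim: "(\<lambda>n. Sup ((\<lambda>k. \<bar>a n k\<bar>) ` {1..})) \<longlonglongrightarrow> 0"
    and xS: "x \<in> prob_simplex"
  shows "((\<nexists>L. conv_to (\<lambda>n. pser_eval (a n) x) L) \<and>
          (\<nexists>L. conv_to (\<lambda>n. pser_eval (a n) (gconv x (c_of x))) L))
       \<or> (\<exists>L. conv_to (\<lambda>n. pser_eval (a n) x) L \<and>
              conv_to (\<lambda>n. pser_eval (a n) (gconv x (c_of x))) L)"
proof -
  define c where "c = c_of x"
  define y where "y = gconv x c"
  have yS: "y \<in> prob_simplex" unfolding y_def c_def
    by (rule prob_gconv[OF xS]) (simp add: c_of_cH cH_prob is_subgroup_gen G_of_def)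
  obtain M \<rho> where M1: "M \<ge> 1" and r0: "0 < \<rho>" and r1: "\<rho> < 1"
    and dec: "\<And>k. l1n (\<lambda>g. gpow x k g - gconv (gpow x k) c g) \<le> 2 * \<rho> ^ (k div M)"
    using decay[OF xS] unfolding c_def by blast
  define E where "E = (\<lambda>k. 2 * \<rho> ^ (Suc k div M))"
  have sE: "summable E"
  proof -
    have "summable (\<lambda>k. \<rho> ^ (Suc k div M))"
      using summable_pow_div[OF r0 r1 M1]
      by (rule iffD2[OF summable_Suc_iff[where f="\<lambda>k. \<rho> ^ (k div M)"]])
    then show ?thesis unfolding E_def by (rule summable_mult)
  qed
  define B where "B = suminf E"
  define S where "S = (\<lambda>n. Sup ((\<lambda>k. \<bar>a n k\<bar>) ` {1..}))"
  have aS: "\<bar>a n (Suc k)\<bar> \<le> S n" for n k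
  proof -
    have "bdd_above ((\<lambda>k. \<bar>a n k\<bar>) ` {1..})"
    proof (rule bdd_aboveI2)
      fix j
      have "sum (\<lambda>k. \<bar>a n k\<bar>) {j} \<le> (\<Sum>k. \<bar>a n k\<bar>)"
        by (rule sum_le_suminf[OF abs_summ]) auto
      then show "\<bar>a n j\<bar> \<le> (\<Sum>k. \<bar>a n k\<bar>)" by simp
    qed
    then show ?thesis unfolding S_def by (rule cSup_upper[rotated]) auto
  qed
  have sumabs: "summable (\<lambda>k. \<bar>a n (Suc k)\<bar>)" for n
    using abs_summ[of n] by (rule iffD2[OF summable_Suc_iff[where f="\<lambda>k. \<bar>a n k\<bar>"]])
  have summ_y: "summable (\<lambda>k. a n (Suc k) * gpow z (Suc k) g)" if "z \<in> prob_simplex" for n g z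
  proof (rule summable_comparison_test[OF _ sumabs[of n]])
    have "\<bar>gpow z (Suc k) g\<bar> \<le> 1" for k
      using prob_le1[OF prob_gpow[OF that], of "Suc k" g] prob_nonneg[OF prob_gpow[OF that], of "Suc k" g]
      by (simp only: abs_le_iff) auto
    then show "\<exists>N. \<forall>k\<ge>N. norm (a n (Suc k) * gpow z (Suc k) g) \<le> \<bar>a n (Suc k)\<bar>"
      by (auto simp: abs_mult intro!: mult_left_le)
  qed
  have bound: "\<bar>pser_eval (a n) x g - pser_eval (a n) y g\<bar> \<le> S n * B" for n g
  proof -
    have "pser_eval (a n) x g - pser_eval (a n) y g =
          (\<Sum>k. a n (Suc k) * gpow x (Suc k) g - a n (Suc k) * gpow y (Suc k) g)"
      unfolding pser_eval_def using summ_y[OF xS] summ_y[OF yS] by (simp add: suminf_diff)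
    also have "\<dots> = (\<Sum>k. a n (Suc k) * (gpow x (Suc k) g - gconv (gpow x (Suc k)) c g))"
      unfolding y_def c_def xc_pow[OF xS] by (simp add: right_diff_distrib)
    finally have eq: "pser_eval (a n) x g - pser_eval (a n) y g =
          (\<Sum>k. a n (Suc k) * (gpow x (Suc k) g - gconv (gpow x (Suc k)) c g))" .
    have tb: "norm (a n (Suc k) * (gpow x (Suc k) g - gconv (gpow x (Suc k)) c g)) \<le> S n * E k" for k
    proof -
      have "\<bar>gpow x (Suc k) g - gconv (gpow x (Suc k)) c g\<bar>
            \<le> l1n (\<lambda>g. gpow x (Suc k) g - gconv (gpow x (Suc k)) c g)"
        using abs_le_l1n[of "\<lambda>g. gpow x (Suc k) g - gconv (gpow x (Suc k)) c g" g] by simp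
      also have "\<dots> \<le> E k" unfolding E_def by (rule dec)
      finally have "\<bar>gpow x (Suc k) g - gconv (gpow x (Suc k)) c g\<bar> \<le> E k" .
      then show ?thesis unfolding real_norm_def abs_mult
        by (intro mult_mono aS) (auto intro: order_trans[OF abs_ge_zero aS])
    qed
    have "norm (\<Sum>k. a n (Suc k) * (gpow x (Suc k) g - gconv (gpow x (Suc k)) c g)) \<le> (\<Sum>k. S n * E k)"
      by (rule norm_suminf_le[OF tb summable_mult[OF sE]])
    also have "\<dots> = S n * B" unfolding B_def by (rule suminf_mult[OF sE])
    finally show ?thesis using eq by simp
  qed
  have dz: "(\<lambda>n. pser_eval (a n) x g - pser_eval (a n) y g) \<longlonglongrightarrow> 0" for g
  proof (rule Lim_null_comparison)
    show "\<forall>\<^sub>F n in sequentially. norm (pser_eval (a n) x g - pser_eval (a n) y g) \<le> S n * B"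
      using bound by simp
    show "(\<lambda>n. S n * B) \<longlonglongrightarrow> 0"
      using tendsto_mult[OF sup_lim tendsto_const[of B]] unfolding S_def by simp
  qed
  show ?thesis
  proof (cases "\<exists>L. conv_to (\<lambda>n. pser_eval (a n) x) L")
    case True
    then obtain L where L: "conv_to (\<lambda>n. pser_eval (a n) x) L" by blast
    have "conv_to (\<lambda>n. pser_eval (a n) y) L"
      unfolding conv_to_def
    proof
      fix g
      have "(\<lambda>n. pser_eval (a n) x g - (pser_eval (a n) x g - pser_eval (a n) y g)) \<longlonglongrightarrow> L g - 0"
        using L dz[of g] unfolding conv_to_def by (intro tendsto_diff) auto
      then show "(\<lambda>n. pser_eval (a n) y g) \<longlonglongrightarrow> L g" by simp
    qed
    then show ?thesis using L unfolding y_def c_def by blast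
  next
    case False
    have "\<nexists>L. conv_to (\<lambda>n. pser_eval (a n) y) L"
    proof
      assume "\<exists>L. conv_to (\<lambda>n. pser_eval (a n) y) L"
      then obtain L where L: "conv_to (\<lambda>n. pser_eval (a n) y) L" by blast
      have "conv_to (\<lambda>n. pser_eval (a n) x) L"
        unfolding conv_to_def
      proof
        fix g
        have "(\<lambda>n. pser_eval (a n) y g + (pser_eval (a n) x g - pser_eval (a n) y g)) \<longlonglongrightarrow> L g + 0"
          using L dz[of g] unfolding conv_to_def by (intro tendsto_add) auto
        then show "(\<lambda>n. pser_eval (a n) x g) \<longlonglongrightarrow> L g" by simp
      qed
      then show False using False by blast
    qed
    then show ?thesis using False unfolding y_def c_def by blast
  qed
qed

end
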